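(* Let $(X,d)$, $(\Lambda,d_\Lambda)$ be compact metric spaces, $\tau:\Lambda\times X\to X$ continuous and $q:X\to\mathcal P(\Lambda)$ continuous. Assume: (W1) each $\tau_\lambda$ is $1$-Lipschitz on $X$; (MP1) there are $s>0$ and an integer $M\ge1$ such that $\int_{\Lambda^M}|f(\tau_{\lambda^M}(x))-f(\tau_{\lambda^M}(y))|\,dP^q_{M,x}(\lambda^M)\le s\,d(x,y)$ for all $x,y\in X$ and all $f\in\mathrm{Lip}_1(X)$; (H2) there is $r\ge0$ with $d(\tau(\lambda_1,x),\tau(\lambda_2,x))\le r\,d_\Lambda(\lambda_1,\lambda_2)$ for all $\lambda_1,\lambda_2$, $x$; (H3) there is $t\ge0$ with $d_{MK}(q_x,q_y)\le t\,d(x,y)$ for all $x,y\in X$. Then there exists $c>0$ such that for every $f\in\mathrm{Lip}_1(X)$, the function $B_q^M(f)$ is $c$-Lipschitz on $X$.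
   Context: $\mathcal{P}(Y)$ is the set of Borel probability measures on a compact metric space $Y$, with $d_{MK}(\mu,\nu)=\sup_{f\in \mathrm{Lip}_1(Y)}\{\int f\,d\mu-\int f\,d\nu\}$, $\mathrm{Lip}_1(Y)$ the real $1$-Lipschitz functions on $Y$. $\tau_\lambda(x)=\tau(\lambda,x)$; for $\lambda^j=(\lambda_0,\dots,\lambda_{j-1})$, $\tau_{\lambda^j}=\tau_{\lambda_{j-1}}\circ\cdots\circ\tau_{\lambda_0}$. $P^q_{M,x}\in\mathcal P(\Lambda^M)$ is given by $dP^q_{M,x}(\lambda_0,\dots,\lambda_{M-1})=dq_{\tau_{\lambda^{M-1}}(x)}(\lambda_{M-1})\cdots dq_{\tau_{\lambda^1}(x)}(\lambda_1)\,dq_x(\lambda_0)$. The transfer operator is $B_q(f)(x)=\int_\Lambda f(\tau(\lambda,x))\,dq_x(\lambda)$, and $B_q^M$ is its $M$-th iterate, so $B_q^M(f)(x)=\int_{\Lambda^M}f(\tau_{\lambda^M}(x))\,dP^q_{M,x}(\lambda^M)$. *)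

theory Defs
  imports "HOL-Probability.Probability"
begin

primrec tau_iter :: "('l \<Rightarrow> 'x \<Rightarrow> 'x) \<Rightarrow> (nat \<Rightarrow> 'l) \<Rightarrow> nat \<Rightarrow> 'x \<Rightarrow> 'x" where
  "tau_iter tau g 0 x = x"
| "tau_iter tau g (Suc j) x = tau (g j) (tau_iter tau g j x)"

text \<open>The path measure P^q_{M,x} on Lambda^M, realised on functions {..<M} -> Lambda
  (extensional, PiM): the j-th coordinate is drawn from q at tau_{lambda^j}(x).\<close>
fun path_measure :: "('x \<Rightarrow> 'l::topological_space measure) \<Rightarrow> ('l \<Rightarrow> 'x \<Rightarrow> 'x) \<Rightarrow> nat \<Rightarrow> 'x
    \<Rightarrow> (nat \<Rightarrow> 'l) measure" where
  "path_measure q tau 0 x = return (PiM {} (\<lambda>_. borel)) (\<lambda>_. undefined)"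
| "path_measure q tau (Suc M) x =
     bind (path_measure q tau M x)
       (\<lambda>g. distr (q (tau_iter tau g M x)) (PiM {..<Suc M} (\<lambda>_. borel)) (\<lambda>a. g(M := a)))"

definition transfer_op :: "('x \<Rightarrow> 'l measure) \<Rightarrow> ('l \<Rightarrow> 'x \<Rightarrow> 'x) \<Rightarrow> ('x \<Rightarrow> real) \<Rightarrow> 'x \<Rightarrow> real" where
  "transfer_op q tau f x = (\<integral>l. f (tau l x) \<partial>(q x))"

definition mk_dist :: "'a::metric_space measure \<Rightarrow> 'a measure \<Rightarrow> real" where
  "mk_dist \<mu> \<nu> = (SUP f \<in> {f :: 'a \<Rightarrow> real. 1-lipschitz_on UNIV f}.
       (\<integral>y. f y \<partial>\<mu>) - (\<integral>y. f y \<partial>\<nu>))"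

definition borel_prob :: "'a::topological_space measure \<Rightarrow> bool" where
  "borel_prob \<mu> \<longleftrightarrow> prob_space \<mu> \<and> sets \<mu> = sets borel"

end

theory Submission
  imports Defs
begin

lemma bp_integrable:
  fixes h :: "'l::metric_space \<Rightarrow> real"
  assumes "borel_prob \<mu>" "compact (UNIV :: 'l set)" "continuous_on UNIV h"
  shows "integrable \<mu> h"
proof -
  interpret prob_space \<mu> using assms(1) by (simp add: borel_prob_def)
  have "compact (range h)" by (rule compact_continuous_image[OF assms(3) assms(2)])
  then have "bounded (range h)" by (rule compact_imp_bounded)
  then obtain B where B0: "\<forall>x\<in>range h. norm x \<le> B"
    unfolding bounded_iff by blast
  then have B: "\<And>l. norm (h l) \<le> B" by simp
  have se: "sets \<mu> = sets borel" using assms(1) by (simp add: borel_prob_def)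
  have "h \<in> borel_measurable borel" by (rule borel_measurable_continuous_onI[OF assms(3)])
  then have "h \<in> borel_measurable \<mu>" by (subst measurable_cong_sets[OF se refl])
  moreover have "AE x in \<mu>. norm (h x) \<le> B" by (rule AE_I2) (rule B)
  ultimately show ?thesis by (intro integrable_const_bound[where B=B])
qed

lemma bp_int_bounds:
  fixes h :: "'l::metric_space \<Rightarrow> real"
  assumes "borel_prob \<mu>" "compact (UNIV :: 'l set)" "continuous_on UNIV h" "\<And>l. \<bar>h l - a\<bar> \<le> D"
  shows "(\<integral>l. h l \<partial>\<mu>) \<le> a + D" "(\<integral>l. h l \<partial>\<mu>) \<ge> a - D"
proof -
  interpret prob_space \<mu> using assms(1) by (simp add: borel_prob_def)
  have i: "integrable \<mu> h" by (rule bp_integrable[OF assms(1-3)])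
  have "(\<integral>l. h l \<partial>\<mu>) \<le> (\<integral>l. a + D \<partial>\<mu>)"
  proof (rule integral_mono[OF i])
    fix l show "h l \<le> a + D" using assms(4)[of l] by (simp add: abs_le_iff)
  qed simp
  then show "(\<integral>l. h l \<partial>\<mu>) \<le> a + D" by (simp add: prob_space)
  have "(\<integral>l. a - D \<partial>\<mu>) \<le> (\<integral>l. h l \<partial>\<mu>)"
  proof (rule integral_mono[OF _ i])
    fix l show "a - D \<le> h l" using assms(4)[of l] by (simp add: abs_le_iff)
  qed simp
  then show "(\<integral>l. h l \<partial>\<mu>) \<ge> a - D" by (simp add: prob_space)
qed

lemma mk_upper:
  fixes h :: "'l::metric_space \<Rightarrow> real"
  assumes "borel_prob \<mu>" "borel_prob \<nu>" "compact (UNIV :: 'l set)" "1-lipschitz_on UNIV h"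
  shows "(\<integral>l. h l \<partial>\<mu>) - (\<integral>l. h l \<partial>\<nu>) \<le> mk_dist \<mu> \<nu>"
proof -
  have "bounded (UNIV::'l set)" by (rule compact_imp_bounded[OF assms(3)])
  then obtain D where D0: "\<forall>y\<in>UNIV. dist (undefined::'l) y \<le> D"
    unfolding bounded_any_center[where a=undefined] by blast
  then have D: "\<And>y. dist (undefined::'l) y \<le> D" by simp
  have "bdd_above ((\<lambda>f. (\<integral>y. f y \<partial>\<mu>) - (\<integral>y. f y \<partial>\<nu>)) ` {f :: 'l \<Rightarrow> real. 1-lipschitz_on UNIV f})"
  proof (rule bdd_aboveI2)
    fix f :: "'l \<Rightarrow> real" assume "f \<in> {f. 1-lipschitz_on UNIV f}"
    then have L: "1-lipschitz_on UNIV f" by simp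
    have c: "continuous_on UNIV f" by (rule lipschitz_on_continuous_on[OF L])
    have b: "\<bar>f l - f undefined\<bar> \<le> D" for l
      using lipschitz_onD[OF L, of l undefined] D[of l] by (simp add: dist_real_def dist_commute)
    show "(\<integral>y. f y \<partial>\<mu>) - (\<integral>y. f y \<partial>\<nu>) \<le> 2 * D"
      using bp_int_bounds[OF assms(1,3) c b] bp_int_bounds[OF assms(2,3) c b] by linarith
  qed
  then show ?thesis unfolding mk_dist_def
    by (rule cSUP_upper[rotated]) (use assms(4) in simp)
qed

lemma step:
  fixes tau :: "'l::metric_space \<Rightarrow> 'x::metric_space \<Rightarrow> 'x"
    and q :: "'x \<Rightarrow> 'l measure" and g :: "'x \<Rightarrow> real"
  assumes compL: "compact (UNIV :: 'l set)"
    and tau_cont: "continuous_on UNIV (\<lambda>(l, x). tau l x)"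
    and q_prob: "\<And>x. borel_prob (q x)"
    and W1: "\<And>l. 1-lipschitz_on UNIV (tau l)"
    and r_nonneg: "r \<ge> 0"
    and H2: "\<And>l1 l2 x. dist (tau l1 x) (tau l2 x) \<le> r * dist l1 l2"
    and t_nonneg: "t \<ge> 0"
    and H3: "\<And>x y. mk_dist (q x) (q y) \<le> t * dist x y"
    and L: "L-lipschitz_on UNIV g"
  shows "(L + (L*r+1)*t)-lipschitz_on UNIV (transfer_op q tau g)"
proof -
  have L0: "L \<ge> 0" using L by (simp add: lipschitz_on_def)
  have gc: "continuous_on UNIV g" by (rule lipschitz_on_continuous_on[OF L])
  have tc: "continuous_on UNIV (\<lambda>l. tau l x)" for x
  proof -
    have "continuous_on UNIV ((\<lambda>(l, x). tau l x) \<circ> (\<lambda>l. (l, x)))"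
      by (rule continuous_on_compose) (auto intro!: continuous_intros continuous_on_subset[OF tau_cont])
    then show ?thesis by (simp add: o_def)
  qed
  have hc: "continuous_on UNIV (\<lambda>l. g (tau l x))" for x
    using continuous_on_compose[OF tc[of x] continuous_on_subset[OF gc]] by (simp add: o_def)
  have one: "transfer_op q tau g x - transfer_op q tau g y \<le> (L + (L*r+1)*t) * dist x y" for x y
  proof -
    interpret px: prob_space "q x" using q_prob by (simp add: borel_prob_def)
    have ix: "integrable (q x) (\<lambda>l. g (tau l x))" "integrable (q x) (\<lambda>l. g (tau l y))"
      using bp_integrable[OF q_prob compL hc] by auto
    have "(\<integral>l. g (tau l x) \<partial>q x) - (\<integral>l. g (tau l y) \<partial>q x) = (\<integral>l. g (tau l x) - g (tau l y) \<partial>q x)"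
      using ix by simp
    also have "\<dots> \<le> (\<integral>l. L * dist x y \<partial>q x)"
    proof (rule integral_mono)
      show "integrable (q x) (\<lambda>l. g (tau l x) - g (tau l y))" using ix by simp
      fix l
      have "g (tau l x) - g (tau l y) \<le> L * dist (tau l x) (tau l y)"
        using lipschitz_onD[OF L, of "tau l x" "tau l y"] by (simp add: dist_real_def)
      also have "\<dots> \<le> L * dist x y"
        using lipschitz_onD[OF W1[of l], of x y] L0 by (simp add: mult_left_mono)
      finally show "g (tau l x) - g (tau l y) \<le> L * dist x y" .
    qed simp
    also have "\<dots> = L * dist x y" by (simp add: px.prob_space)
    finally have A: "(\<integral>l. g (tau l x) \<partial>q x) - (\<integral>l. g (tau l y) \<partial>q x) \<le> L * dist x y" .
    define h where "h l = g (tau l y) / (L*r+1)" for l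
    have pos: "L*r+1 > 0" using L0 r_nonneg by (simp add: add_nonneg_pos)
    have "1-lipschitz_on UNIV h"
    proof (rule lipschitz_onI)
      fix l1 l2 :: 'l
      have "dist (g (tau l1 y)) (g (tau l2 y)) \<le> L * dist (tau l1 y) (tau l2 y)"
        using lipschitz_onD[OF L] by simp
      also have "\<dots> \<le> L * (r * dist l1 l2)" using H2 L0 by (simp add: mult_left_mono)
      also have "\<dots> \<le> (L*r+1) * dist l1 l2" by (simp add: algebra_simps)
      finally have "dist (g (tau l1 y)) (g (tau l2 y)) \<le> (L*r+1) * dist l1 l2" .
      then have le: "\<bar>g (tau l1 y) - g (tau l2 y)\<bar> \<le> dist l1 l2 * (L*r+1)"
        by (simp only: dist_real_def mult.commute)
      have "dist (h l1) (h l2) = \<bar>g (tau l1 y) - g (tau l2 y)\<bar> / (L*r+1)"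
        using pos unfolding h_def dist_real_def by (simp add: diff_divide_distrib[symmetric] abs_div)
      also have "\<dots> \<le> dist l1 l2" using le by (simp only: pos_divide_le_eq[OF pos])
      finally show "dist (h l1) (h l2) \<le> 1 * dist l1 l2" by simp
    qed simp
    then have "(\<integral>l. h l \<partial>q x) - (\<integral>l. h l \<partial>q y) \<le> mk_dist (q x) (q y)"
      by (rule mk_upper[OF q_prob q_prob compL])
    also have "\<dots> \<le> t * dist x y" by (rule H3)
    finally have "(\<integral>l. h l \<partial>q x) - (\<integral>l. h l \<partial>q y) \<le> t * dist x y" .
    then have "((\<integral>l. g (tau l y) \<partial>q x) - (\<integral>l. g (tau l y) \<partial>q y)) / (L*r+1) \<le> t * dist x y"
      unfolding h_def by (simp add: diff_divide_distrib)
    then have "(\<integral>l. g (tau l y) \<partial>q x) - (\<integral>l. g (tau l y) \<partial>q y) \<le> t * dist x y * (L*r+1)"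
      using pos by (simp only: pos_divide_le_eq)
    also have "t * dist x y * (L*r+1) = (L*r+1) * t * dist x y" by (simp only: mult_ac)
    finally have B: "(\<integral>l. g (tau l y) \<partial>q x) - (\<integral>l. g (tau l y) \<partial>q y) \<le> (L*r+1) * t * dist x y" .
    have E: "(L + (L*r+1)*t) * dist x y = L * dist x y + (L*r+1) * t * dist x y"
      by (simp only: distrib_right)
    show ?thesis using A B E unfolding transfer_op_def by linarith
  qed
  show ?thesis
  proof (rule lipschitz_onI)
    fix x y :: 'x
    show "dist (transfer_op q tau g x) (transfer_op q tau g y) \<le> (L + (L*r+1)*t) * dist x y"
    proof -
      have o2: "transfer_op q tau g y - transfer_op q tau g x \<le> (L + (L*r+1)*t) * dist x y"
        using one[of y x] by (metis dist_commute)
      show ?thesis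
        unfolding dist_real_def by (rule abs_leI) (use one[of x y] o2 in linarith)+
    qed
  next
    have "0 \<le> L*r+1" using L0 r_nonneg by simp
    then have "0 \<le> (L*r+1)*t" using t_nonneg by (rule mult_nonneg_nonneg)
    then show "0 \<le> L + (L*r+1)*t" using L0 by linarith
  qed
qed

primrec cseq :: "real \<Rightarrow> real \<Rightarrow> nat \<Rightarrow> real" where
  "cseq r t 0 = 1"
| "cseq r t (Suc n) = cseq r t n + (cseq r t n * r + 1) * t"

theorem mainTheorem10:
  fixes tau :: "'l::metric_space \<Rightarrow> 'x::metric_space \<Rightarrow> 'x"
    and q :: "'x \<Rightarrow> 'l measure"
    and s :: real and M :: nat and r :: real and t :: real
  assumes compX: "compact (UNIV :: 'x set)"
    and compL: "compact (UNIV :: 'l set)"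
    and tau_cont: "continuous_on UNIV (\<lambda>(l, x). tau l x)"
    and q_prob: "\<And>x. borel_prob (q x)"
    and q_cont: "\<And>h :: 'l \<Rightarrow> real. continuous_on UNIV h \<Longrightarrow>
                   continuous_on UNIV (\<lambda>x. \<integral>l. h l \<partial>(q x))"
    and W1: "\<And>l. 1-lipschitz_on UNIV (tau l)"
    and s_pos: "s > 0" and M_ge: "M \<ge> 1"
    and MP1: "\<And>f x y. 1-lipschitz_on (UNIV :: 'x set) f \<Longrightarrow>
                (\<integral>g. \<bar>f (tau_iter tau g M x) - f (tau_iter tau g M y)\<bar> \<partial>(path_measure q tau M x))
                  \<le> s * dist x y"
    and r_nonneg: "r \<ge> 0"
    and H2: "\<And>l1 l2 x. dist (tau l1 x) (tau l2 x) \<le> r * dist l1 l2"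
    and t_nonneg: "t \<ge> 0"
    and H3: "\<And>x y. mk_dist (q x) (q y) \<le> t * dist x y"
  shows "\<exists>c>0. \<forall>f :: 'x \<Rightarrow> real. 1-lipschitz_on UNIV f \<longrightarrow>
           c-lipschitz_on UNIV ((transfer_op q tau ^^ M) f)"
proof -
  have pos: "cseq r t n \<ge> 1" for n
  proof (induction n)
    case 0 show ?case by simp
  next
    case (Suc n)
    have "0 \<le> cseq r t n * r" using Suc r_nonneg by simp
    then have "0 \<le> (cseq r t n * r + 1) * t" using t_nonneg by simp
    then show ?case using Suc by simp
  qed
  have "(cseq r t n)-lipschitz_on UNIV ((transfer_op q tau ^^ n) f)"
    if f: "1-lipschitz_on UNIV f" for n and f :: "'x \<Rightarrow> real"
  proof (induction n)
    case 0 then show ?case using f by simp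
  next
    case (Suc n)
    show ?case
      using step[OF compL tau_cont q_prob W1 r_nonneg H2 t_nonneg H3 Suc.IH]
      by (simp only: cseq.simps funpow.simps o_apply)
  qed
  moreover have "cseq r t M > 0" using pos[of M] by linarith
  ultimately show ?thesis by blast
qed

end
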